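(* Let $(\Omega_i,\rho_i)$ be a classical model of the information structure $(\mathcal S_i,E_i)$ for $i=1,2$. Then (1) $(\Omega_1\times\Omega_2,\rho_\times)$ is a classical model of the product $(\mathcal S_1,E_1)\times(\mathcal S_2,E_2)$, where $\rho_\times(\langle X_1,X_2\rangle)=\rho_1(X_1)\times\rho_2(X_2)$; and (2) $(\Omega_1\times\Omega_2,\rho_{\amalg})$ is a classical model of the coproduct $(\mathcal S_1,E_1)\amalg(\mathcal S_2,E_2)$, where $\rho_\amalg(\mathbf 1)=\{\Omega_1\times\Omega_2\}$, $\rho_\amalg(X)=\rho_1(X)\times\{\Omega_2\}$ for $X\in\mathrm{Ob}\,\mathcal S_1\setminus\{\mathbf 1\}$ and $\rho_\amalg(X)=\{\Omega_1\}\times\rho_2(X)$ for $X\in\mathrm{Ob}\,\mathcal S_2\setminus\{\mathbf 1\}$.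
   Context: An information structure is a pair $(\mathcal S,E)$, $\mathcal S$ a small category and $E:\mathcal S\to\mathcal{Sets}$ a functor, such that: $\mathcal S$ has a terminal object $\mathbf 1$; $\mathcal S$ is a poset; its nerve is finite dimensional; if $Z\to X$ and $Z\to Y$ then $X\wedge Y$ exists; $E(\mathbf 1)$ is a singleton; for $\pi:X\to Y$, $X\ne Y$, $E(\pi)$ is surjective with $|E(X)|>|E(Y)|$; for every product diagram $X\xleftarrow{\pi}X\wedge Y\xrightarrow{\sigma}Y$ and $(x,y)$, $|E(\pi)^{-1}(x)\cap E(\sigma)^{-1}(y)|\le1$; every $x\in E(X)$ is the $X$-component of some element of $\lim E$. The product $(\mathcal S_1,E_1)\times(\mathcal S_2,E_2)=(\mathcal S,E)$ has objects the pairs $\langle X_1,X_2\rangle$, an arrow $\langle X_1,X_2\rangle\to\langle Y_1,Y_2\rangle$ iff $X_i\to Y_i$ for $i=1,2$, and $E(\langle X_1,X_2\rangle)=E_1(X_1)\times E_2(X_2)$, $E(\langle\pi_1,\pi_2\rangle)=E_1(\pi_1)\times E_2(\pi_2)$. The coproduct has as poset of objects $\mathrm{Ob}\,\mathcal S_1\sqcup\mathrm{Ob}\,\mathcal S_2$ with the two terminal objects identified (arrows those of $\mathcal S_1$ or of $\mathcal S_2$), and $E(X)=E_i(X)$ for $X\in\mathrm{Ob}\,\mathcal S_i$. For a set $\Omega$, $\mathcal O(\Omega)$ is the category of finite partitions of $\Omega$ with $X\to Y$ iff $X$ refines $Y$; the product $XY$ of partitions is their coarsest common refinement. For families $\mathcal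 A,\mathcal B$ of subsets of $\Omega_1,\Omega_2$, $\mathcal A\times\mathcal B=\{A\times B: A\in\mathcal A, B\in\mathcal B\}$. A classical model of $(\mathcal S,E)$ is $(\Omega,\rho)$ with $\rho:\mathcal S\to\mathcal O(\Omega)$ a functor injective on objects, bijections $E(X)\simeq\rho(X)$ for all $X$, and $\rho(X\wedge Y)=\rho(X)\rho(Y)$ whenever $X\wedge Y$ exists. *)

theory Defs
  imports Main "HOL-Library.Equipollence"
begin

text \<open>A small poset category S together with a functor E into Sets.
  Obj: objects; Arr X Y: there is an arrow X -> Y (at most one, as S is a poset);
  Top: the terminal object; Ev X: the set E(X); Emap X Y: the map E(X -> Y).\<close>
record ('a, 'b) infostr =
  Obj  :: "'a set"
  Arr  :: "'a \<Rightarrow> 'a \<Rightarrow> bool"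
  Top  :: "'a"
  Ev   :: "'a \<Rightarrow> 'b set"
  Emap :: "'a \<Rightarrow> 'a \<Rightarrow> 'b \<Rightarrow> 'b"

definition is_meet :: "('a, 'b, 'z) infostr_scheme \<Rightarrow> 'a \<Rightarrow> 'a \<Rightarrow> 'a \<Rightarrow> bool" where
  "is_meet S X Y M \<longleftrightarrow> M \<in> Obj S \<and> Arr S M X \<and> Arr S M Y \<and>
     (\<forall>Z\<in>Obj S. Arr S Z X \<and> Arr S Z Y \<longrightarrow> Arr S Z M)"

definition lim_E :: "('a, 'b, 'z) infostr_scheme \<Rightarrow> ('a \<Rightarrow> 'b) set" where
  "lim_E S = {s. (\<forall>X\<in>Obj S. s X \<in> Ev S X) \<and>
     (\<forall>X\<in>Obj S. \<forall>Y\<in>Obj S. Arr S X Y \<longrightarrow> Emap S X Y (s X) = s Y)}"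

definition information_structure :: "('a, 'b, 'z) infostr_scheme \<Rightarrow> bool" where
  "information_structure S \<longleftrightarrow>
     \<comment> \<open>poset\<close>
     (\<forall>X\<in>Obj S. Arr S X X) \<and>
     (\<forall>X\<in>Obj S. \<forall>Y\<in>Obj S. Arr S X Y \<and> Arr S Y X \<longrightarrow> X = Y) \<and>
     (\<forall>X\<in>Obj S. \<forall>Y\<in>Obj S. \<forall>Z\<in>Obj S. Arr S X Y \<and> Arr S Y Z \<longrightarrow> Arr S X Z) \<and>
     \<comment> \<open>terminal object\<close>
     Top S \<in> Obj S \<and> (\<forall>X\<in>Obj S. Arr S X (Top S)) \<and>
     \<comment> \<open>E is a functor\<close>
     (\<forall>X\<in>Obj S. \<forall>Y\<in>Obj S. Arr S X Y \<longrightarrow> Emap S X Y ` Ev S X \<subseteq> Ev S Y) \<and>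
     (\<forall>X\<in>Obj S. \<forall>x\<in>Ev S X. Emap S X X x = x) \<and>
     (\<forall>X\<in>Obj S. \<forall>Y\<in>Obj S. \<forall>Z\<in>Obj S. Arr S X Y \<and> Arr S Y Z \<longrightarrow>
        (\<forall>x\<in>Ev S X. Emap S Y Z (Emap S X Y x) = Emap S X Z x)) \<and>
     \<comment> \<open>finite dimensional nerve: chains have bounded length\<close>
     (\<exists>n::nat. \<forall>C\<subseteq>Obj S. finite C \<and> (\<forall>X\<in>C. \<forall>Y\<in>C. Arr S X Y \<or> Arr S Y X) \<longrightarrow> card C \<le> n) \<and>
     \<comment> \<open>meets exist for pairs with a common lower bound\<close>
     (\<forall>X\<in>Obj S. \<forall>Y\<in>Obj S. (\<exists>Z\<in>Obj S. Arr S Z X \<and> Arr S Z Y) \<longrightarrow> (\<exists>M. is_meet S X Y M)) \<and>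
     \<comment> \<open>E(1) is a singleton\<close>
     (\<exists>e. Ev S (Top S) = {e}) \<and>
     \<comment> \<open>proper arrows: surjective and strictly decreasing cardinality\<close>
     (\<forall>X\<in>Obj S. \<forall>Y\<in>Obj S. Arr S X Y \<and> X \<noteq> Y \<longrightarrow>
        Emap S X Y ` Ev S X = Ev S Y \<and> Ev S Y \<prec> Ev S X) \<and>
     \<comment> \<open>product condition\<close>
     (\<forall>X\<in>Obj S. \<forall>Y\<in>Obj S. \<forall>M. is_meet S X Y M \<longrightarrow>
        (\<forall>x y. card {z\<in>Ev S M. Emap S M X z = x \<and> Emap S M Y z = y} \<le> 1 \<and>
               finite {z\<in>Ev S M. Emap S M X z = x \<and> Emap S M Y z = y})) \<and>
     \<comment> \<open>every element is a component of some element of lim E\<close>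
     (\<forall>X\<in>Obj S. \<forall>x\<in>Ev S X. \<exists>s\<in>lim_E S. s X = x)"

definition infostr_prod ::
  "('a, 'b) infostr \<Rightarrow> ('c, 'd) infostr \<Rightarrow> ('a \<times> 'c, 'b \<times> 'd) infostr" where
  "infostr_prod S1 S2 =
     \<lparr> Obj = Obj S1 \<times> Obj S2,
       Arr = (\<lambda>(X1, X2) (Y1, Y2). Arr S1 X1 Y1 \<and> Arr S2 X2 Y2),
       Top = (Top S1, Top S2),
       Ev = (\<lambda>(X1, X2). Ev S1 X1 \<times> Ev S2 X2),
       Emap = (\<lambda>(X1, X2) (Y1, Y2). map_prod (Emap S1 X1 Y1) (Emap S2 X2 Y2)) \<rparr>"

text \<open>Coproduct: objects Ob S1 and Ob S2 glued along the terminal objects. The terminal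
  object of S2 is identified with (the image of) the terminal object of S1, so the
  objects are Inl ` Ob S1 and Inr ` (Ob S2 - {1}). The unique arrow X -> 1 for X in S2
  is sent to the unique map into the singleton E(1) = E1(1).\<close>
fun coprod_arr :: "('a, 'b) infostr \<Rightarrow> ('c, 'd) infostr \<Rightarrow> 'a + 'c \<Rightarrow> 'a + 'c \<Rightarrow> bool" where
  "coprod_arr S1 S2 (Inl X) (Inl Y) = Arr S1 X Y"
| "coprod_arr S1 S2 (Inr X) (Inr Y) = Arr S2 X Y"
| "coprod_arr S1 S2 (Inr X) (Inl Y) = (Y = Top S1)"
| "coprod_arr S1 S2 (Inl X) (Inr Y) = False"

fun coprod_ev :: "('a, 'b) infostr \<Rightarrow> ('c, 'd) infostr \<Rightarrow> 'a + 'c \<Rightarrow> ('b + 'd) set" where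
  "coprod_ev S1 S2 (Inl X) = Inl ` Ev S1 X"
| "coprod_ev S1 S2 (Inr X) = Inr ` Ev S2 X"

fun coprod_emap :: "('a, 'b) infostr \<Rightarrow> ('c, 'd) infostr \<Rightarrow> 'a + 'c \<Rightarrow> 'a + 'c \<Rightarrow> 'b + 'd \<Rightarrow> 'b + 'd" where
  "coprod_emap S1 S2 (Inl X) (Inl Y) v = Inl (Emap S1 X Y (projl v))"
| "coprod_emap S1 S2 (Inr X) (Inr Y) v = Inr (Emap S2 X Y (projr v))"
| "coprod_emap S1 S2 (Inr X) (Inl Y) v = Inl (THE e. e \<in> Ev S1 (Top S1))"
| "coprod_emap S1 S2 (Inl X) (Inr Y) v = v"

definition infostr_coprod ::
  "('a, 'b) infostr \<Rightarrow> ('c, 'd) infostr \<Rightarrow> ('a + 'c, 'b + 'd) infostr" where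
  "infostr_coprod S1 S2 =
     \<lparr> Obj = Inl ` Obj S1 \<union> Inr ` (Obj S2 - {Top S2}),
       Arr = coprod_arr S1 S2,
       Top = Inl (Top S1),
       Ev = coprod_ev S1 S2,
       Emap = coprod_emap S1 S2 \<rparr>"

definition finite_partition :: "'w set \<Rightarrow> 'w set set \<Rightarrow> bool" where
  "finite_partition \<Omega> P \<longleftrightarrow> finite P \<and> \<Union>P = \<Omega> \<and> {} \<notin> P \<and>
     (\<forall>A\<in>P. \<forall>B\<in>P. A \<noteq> B \<longrightarrow> A \<inter> B = {})"

definition refines :: "'w set set \<Rightarrow> 'w set set \<Rightarrow> bool" where
  "refines P Q \<longleftrightarrow> (\<forall>A\<in>P. \<exists>B\<in>Q. A \<subseteq> B)"

definition partition_mult :: "'w set set \<Rightarrow> 'w set set \<Rightarrow> 'w set set" where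
  "partition_mult P Q = {A \<inter> B | A B. A \<in> P \<and> B \<in> Q \<and> A \<inter> B \<noteq> {}}"

definition family_times :: "'u set set \<Rightarrow> 'v set set \<Rightarrow> ('u \<times> 'v) set set" where
  "family_times \<A> \<B> = {A \<times> B | A B. A \<in> \<A> \<and> B \<in> \<B>}"

definition classical_model :: "('a, 'b, 'z) infostr_scheme \<Rightarrow> 'w set \<Rightarrow> ('a \<Rightarrow> 'w set set) \<Rightarrow> bool" where
  "classical_model S \<Omega> \<rho> \<longleftrightarrow>
     (\<forall>X\<in>Obj S. finite_partition \<Omega> (\<rho> X)) \<and>
     (\<forall>X\<in>Obj S. \<forall>Y\<in>Obj S. Arr S X Y \<longrightarrow> refines (\<rho> X) (\<rho> Y)) \<and>
     inj_on \<rho> (Obj S) \<and>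
     (\<forall>X\<in>Obj S. \<exists>f. bij_betw f (Ev S X) (\<rho> X)) \<and>
     (\<forall>X\<in>Obj S. \<forall>Y\<in>Obj S. \<forall>M. is_meet S X Y M \<longrightarrow> \<rho> M = partition_mult (\<rho> X) (\<rho> Y))"

definition rho_prod :: "('a \<Rightarrow> 'u set set) \<Rightarrow> ('c \<Rightarrow> 'v set set) \<Rightarrow> 'a \<times> 'c \<Rightarrow> ('u \<times> 'v) set set" where
  "rho_prod \<rho>1 \<rho>2 = (\<lambda>(X1, X2). family_times (\<rho>1 X1) (\<rho>2 X2))"

fun rho_coprod :: "('a, 'b) infostr \<Rightarrow> 'u set \<Rightarrow> ('a \<Rightarrow> 'u set set) \<Rightarrow> 'v set \<Rightarrow> ('c \<Rightarrow> 'v set set)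
    \<Rightarrow> 'a + 'c \<Rightarrow> ('u \<times> 'v) set set" where
  "rho_coprod S1 \<Omega>1 \<rho>1 \<Omega>2 \<rho>2 (Inl X) =
     (if X = Top S1 then {\<Omega>1 \<times> \<Omega>2} else family_times (\<rho>1 X) {\<Omega>2})"
| "rho_coprod S1 \<Omega>1 \<rho>1 \<Omega>2 \<rho>2 (Inr X) = family_times {\<Omega>1} (\<rho>2 X)"

end

theory Submission
  imports Defs
begin


lemma ft_partition:
  assumes "finite_partition A P" "finite_partition B Q"
  shows "finite_partition (A \<times> B) (family_times P Q)"
proof -
  have img: "family_times P Q = (\<lambda>(a,b). a \<times> b) ` (P \<times> Q)"
  proof
    show "family_times P Q \<subseteq> (\<lambda>(a,b). a \<times> b) ` (P \<times> Q)"
    proof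
      fix C assume "C \<in> family_times P Q"
      then obtain a b where "C = a \<times> b" "a \<in> P" "b \<in> Q" unfolding family_times_def by blast
      thus "C \<in> (\<lambda>(a,b). a \<times> b) ` (P \<times> Q)" by (intro image_eqI[where x="(a,b)"]) simp_all
    qed
    show "(\<lambda>(a,b). a \<times> b) ` (P \<times> Q) \<subseteq> family_times P Q"
    proof (rule image_subsetI)
      fix p assume "p \<in> P \<times> Q"
      then obtain a b where "p = (a,b)" "a \<in> P" "b \<in> Q" by (rule SigmaE)
      thus "(\<lambda>(a,b). a \<times> b) p \<in> family_times P Q" unfolding family_times_def by blast
    qed
  qed
  have fP: "finite P" "\<Union>P = A" "{} \<notin> P" "\<forall>x\<in>P. \<forall>y\<in>P. x \<noteq> y \<longrightarrow> x \<inter> y = {}"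
    using assms(1) unfolding finite_partition_def by blast+
  have fQ: "finite Q" "\<Union>Q = B" "{} \<notin> Q" "\<forall>x\<in>Q. \<forall>y\<in>Q. x \<noteq> y \<longrightarrow> x \<inter> y = {}"
    using assms(2) unfolding finite_partition_def by blast+
  have fin: "finite (family_times P Q)" unfolding img using fP(1) fQ(1) by simp
  have u: "\<Union>(family_times P Q) = A \<times> B"
  proof
    show "\<Union>(family_times P Q) \<subseteq> A \<times> B"
    proof
      fix z assume "z \<in> \<Union>(family_times P Q)"
      then obtain C where C: "C \<in> family_times P Q" "z \<in> C" by (rule UnionE)
      then obtain a b where ab: "C = a \<times> b" "a \<in> P" "b \<in> Q" unfolding family_times_def by blast
      have "a \<subseteq> A" using Union_upper[OF ab(2)] fP(2) by simp
      moreover have "b \<subseteq> B" using Union_upper[OF ab(3)] fQ(2) by simp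
      ultimately have "C \<subseteq> A \<times> B" using ab(1) by (simp add: Sigma_mono)
      thus "z \<in> A \<times> B" using C(2) by (rule subsetD)
    qed
    show "A \<times> B \<subseteq> \<Union>(family_times P Q)"
    proof
      fix z assume "z \<in> A \<times> B"
      then obtain x y where z: "x \<in> A" "y \<in> B" "z = (x,y)" by (rule SigmaE)
      have "x \<in> \<Union>P" using z(1) fP(2) by simp
      then obtain a where a: "x \<in> a" "a \<in> P" by (rule UnionE)
      have "y \<in> \<Union>Q" using z(2) fQ(2) by simp
      then obtain b where b: "y \<in> b" "b \<in> Q" by (rule UnionE)
      have "a \<times> b \<in> family_times P Q" using a b unfolding family_times_def by blast
      moreover have "z \<in> a \<times> b" using z(3) a(1) b(1) by simp
      ultimately show "z \<in> \<Union>(family_times P Q)" by (rule UnionI)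
    qed
  qed
  have e: "{} \<notin> family_times P Q"
  proof
    assume "{} \<in> family_times P Q"
    then obtain a b where ab: "{} = a \<times> b" "a \<in> P" "b \<in> Q" unfolding family_times_def by blast
    have "a \<noteq> {}" using ab(2) fP(3) by blast
    then obtain x where x: "x \<in> a" by blast
    have "b \<noteq> {}" using ab(3) fQ(3) by blast
    then obtain y where y: "y \<in> b" by blast
    have "(x,y) \<in> a \<times> b" using x y by (rule SigmaI)
    thus False using ab(1) by simp
  qed
  have d: "\<forall>C\<in>family_times P Q. \<forall>D\<in>family_times P Q. C \<noteq> D \<longrightarrow> C \<inter> D = {}"
  proof (intro ballI impI)
    fix C D assume "C \<in> family_times P Q" "D \<in> family_times P Q" "C \<noteq> D"
    obtain a b where h1: "C = a \<times> b" "a \<in> P" "b \<in> Q"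
      using \<open>C \<in> family_times P Q\<close> unfolding family_times_def by blast
    obtain a' b' where h2: "D = a' \<times> b'" "a' \<in> P" "b' \<in> Q"
      using \<open>D \<in> family_times P Q\<close> unfolding family_times_def by blast
    have CD: "C \<inter> D = (a \<inter> a') \<times> (b \<inter> b')" unfolding h1(1) h2(1) by (rule Times_Int_Times)
    show "C \<inter> D = {}"
    proof (cases "a = a'")
      case True
      have "b \<noteq> b'"
      proof
        assume "b = b'" thus False using True h1(1) h2(1) \<open>C \<noteq> D\<close> by simp
      qed
      hence "b \<inter> b' = {}" using fQ(4) h1(3) h2(3) by blast
      thus ?thesis using CD by simp
    next
      case False
      hence "a \<inter> a' = {}" using fP(4) h1(2) h2(2) by blast
      thus ?thesis using CD by simp
    qed
  qed
  show ?thesis using fin u e d unfolding finite_partition_def by (intro conjI)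
qed

lemma ft_refines:
  assumes "refines P P'" "refines Q Q'"
  shows "refines (family_times P Q) (family_times P' Q')"
  unfolding refines_def
proof
  fix C assume "C \<in> family_times P Q"
  then obtain a b where ab: "C = a \<times> b" "a \<in> P" "b \<in> Q" unfolding family_times_def by blast
  obtain a' where a': "a' \<in> P'" "a \<subseteq> a'" using assms(1) ab unfolding refines_def by blast
  obtain b' where b': "b' \<in> Q'" "b \<subseteq> b'" using assms(2) ab unfolding refines_def by blast
  have "a' \<times> b' \<in> family_times P' Q'" using a' b' unfolding family_times_def by blast
  moreover have "C \<subseteq> a' \<times> b'" using ab a' b' by auto
  ultimately show "\<exists>D\<in>family_times P' Q'. C \<subseteq> D" by blast
qed

lemma ft_mult:
  "partition_mult (family_times P Q) (family_times P' Q') =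
   family_times (partition_mult P P') (partition_mult Q Q')"
proof
  show "partition_mult (family_times P Q) (family_times P' Q') \<subseteq> family_times (partition_mult P P') (partition_mult Q Q')"
  proof
    fix C assume "C \<in> partition_mult (family_times P Q) (family_times P' Q')"
    then obtain a b a' b' where "C = (a \<times> b) \<inter> (a' \<times> b')" "a \<in> P" "b \<in> Q" "a' \<in> P'" "b' \<in> Q'" "C \<noteq> {}"
      unfolding partition_mult_def family_times_def by blast
    moreover have "(a \<times> b) \<inter> (a' \<times> b') = (a \<inter> a') \<times> (b \<inter> b')" by auto
    ultimately show "C \<in> family_times (partition_mult P P') (partition_mult Q Q')"
      unfolding partition_mult_def family_times_def by blast
  qed
next
  show "family_times (partition_mult P P') (partition_mult Q Q') \<subseteq> partition_mult (family_times P Q) (family_times P' Q')"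
  proof
    fix C assume "C \<in> family_times (partition_mult P P') (partition_mult Q Q')"
    then obtain a b a' b' where "C = (a \<inter> a') \<times> (b \<inter> b')" "a \<in> P" "b \<in> Q" "a' \<in> P'" "b' \<in> Q'"
       "a \<inter> a' \<noteq> {}" "b \<inter> b' \<noteq> {}"
      unfolding partition_mult_def family_times_def by blast
    moreover have "(a \<times> b) \<inter> (a' \<times> b') = (a \<inter> a') \<times> (b \<inter> b')" by auto
    ultimately show "C \<in> partition_mult (family_times P Q) (family_times P' Q')"
      unfolding partition_mult_def family_times_def by blast
  qed
qed

lemma ft_inj:
  assumes "family_times P Q = family_times P' Q'" "{} \<notin> P" "{} \<notin> Q" "{} \<notin> P'" "{} \<notin> Q'"
    "P \<noteq> {}" "Q \<noteq> {}" "P' \<noteq> {}" "Q' \<noteq> {}"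
  shows "P = P' \<and> Q = Q'"
proof -
  have 1: "a \<in> X'" if eq: "family_times X Y = family_times X' Y'" and "a \<in> X" "{} \<notin> X" "{} \<notin> Y" "Y \<noteq> {}"
    for a and X X' :: "'a set set" and Y Y' :: "'b set set"
  proof -
    obtain b where b: "b \<in> Y" using \<open>Y \<noteq> {}\<close> by auto
    have "a \<times> b \<in> family_times X Y" using b \<open>a \<in> X\<close> unfolding family_times_def by auto
    hence "a \<times> b \<in> family_times X' Y'" using eq by simp
    then obtain a' b' where "a \<times> b = a' \<times> b'" "a' \<in> X'" unfolding family_times_def by auto
    moreover have "a \<noteq> {}" "b \<noteq> {}" using that b by auto
    ultimately show ?thesis by (metis times_eq_iff)
  qed
  have 2: "b \<in> Y'" if eq: "family_times X Y = family_times X' Y'" and "b \<in> Y" "{} \<notin> X" "{} \<notin> Y" "X \<noteq> {}"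
    for b and X X' :: "'a set set" and Y Y' :: "'b set set"
  proof -
    obtain a where a: "a \<in> X" using \<open>X \<noteq> {}\<close> by auto
    have "a \<times> b \<in> family_times X Y" using a \<open>b \<in> Y\<close> unfolding family_times_def by auto
    hence "a \<times> b \<in> family_times X' Y'" using eq by simp
    then obtain a' b' where "a \<times> b = a' \<times> b'" "b' \<in> Y'" unfolding family_times_def by auto
    moreover have "a \<noteq> {}" "b \<noteq> {}" using that a by auto
    ultimately show ?thesis by (metis times_eq_iff)
  qed
  show ?thesis using 1[OF assms(1)] 1[OF assms(1)[symmetric]] 2[OF assms(1)] 2[OF assms(1)[symmetric]] assms
    by blast
qed

lemma ft_bij:
  assumes "bij_betw f E P" "bij_betw g F Q" "{} \<notin> P" "{} \<notin> Q"
  shows "bij_betw (\<lambda>(a,b). f a \<times> g b) (E \<times> F) (family_times P Q)"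
  unfolding bij_betw_def
proof
  show "inj_on (\<lambda>(a, b). f a \<times> g b) (E \<times> F)"
  proof (rule inj_onI, clarify)
    fix a b a' b' assume h: "a \<in> E" "b \<in> F" "a' \<in> E" "b' \<in> F" "f a \<times> g b = f a' \<times> g b'"
    have "f a \<in> P" "g b \<in> Q" "f a' \<in> P" "g b' \<in> Q" using h assms unfolding bij_betw_def by auto
    hence "f a \<noteq> {}" "g b \<noteq> {}" "f a' \<noteq> {}" "g b' \<noteq> {}" using assms by auto
    hence "f a = f a'" "g b = g b'" using h(5) by (metis times_eq_iff)+
    thus "a = a' \<and> b = b'" using h assms unfolding bij_betw_def inj_on_def by blast
  qed
  show "(\<lambda>(a, b). f a \<times> g b) ` (E \<times> F) = family_times P Q"
    using assms unfolding bij_betw_def family_times_def by fastforce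
qed

lemma cm_part: assumes "classical_model S \<Omega> \<rho>" "X \<in> Obj S" shows "finite_partition \<Omega> (\<rho> X)"
proof -
  have "\<forall>X\<in>Obj S. finite_partition \<Omega> (\<rho> X)"
    using assms(1) unfolding classical_model_def by (elim conjE) assumption
  thus ?thesis using assms by blast
qed

lemma cm_ref: assumes "classical_model S \<Omega> \<rho>" "X \<in> Obj S" "Y \<in> Obj S" "Arr S X Y" shows "refines (\<rho> X) (\<rho> Y)"
proof -
  have "\<forall>X\<in>Obj S. \<forall>Y\<in>Obj S. Arr S X Y \<longrightarrow> refines (\<rho> X) (\<rho> Y)"
    using assms(1) unfolding classical_model_def by (elim conjE) assumption
  thus ?thesis using assms by blast
qed

lemma cm_inj: assumes "classical_model S \<Omega> \<rho>" "X \<in> Obj S" "Y \<in> Obj S" "\<rho> X = \<rho> Y" shows "X = Y"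
proof -
  have "inj_on \<rho> (Obj S)"
    using assms(1) unfolding classical_model_def by (elim conjE) assumption
  thus ?thesis using assms unfolding inj_on_def by blast
qed

lemma cm_bij: assumes "classical_model S \<Omega> \<rho>" "X \<in> Obj S" shows "\<exists>f. bij_betw f (Ev S X) (\<rho> X)"
proof -
  have "\<forall>X\<in>Obj S. \<exists>f. bij_betw f (Ev S X) (\<rho> X)"
    using assms(1) unfolding classical_model_def by (elim conjE) assumption
  thus ?thesis using assms by blast
qed

lemma cm_meet: assumes "classical_model S \<Omega> \<rho>" "X \<in> Obj S" "Y \<in> Obj S" "is_meet S X Y M"
  shows "\<rho> M = partition_mult (\<rho> X) (\<rho> Y)"
proof -
  have "\<forall>X\<in>Obj S. \<forall>Y\<in>Obj S. \<forall>M. is_meet S X Y M \<longrightarrow> \<rho> M = partition_mult (\<rho> X) (\<rho> Y)"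
    using assms(1) unfolding classical_model_def by (elim conjE) assumption
  thus ?thesis using assms by blast
qed

lemma cm_intro:
  assumes "\<forall>X\<in>Obj S. finite_partition \<Omega> (\<rho> X)"
    "\<forall>X\<in>Obj S. \<forall>Y\<in>Obj S. Arr S X Y \<longrightarrow> refines (\<rho> X) (\<rho> Y)"
    "inj_on \<rho> (Obj S)"
    "\<forall>X\<in>Obj S. \<exists>f. bij_betw f (Ev S X) (\<rho> X)"
    "\<forall>X\<in>Obj S. \<forall>Y\<in>Obj S. \<forall>M. is_meet S X Y M \<longrightarrow> \<rho> M = partition_mult (\<rho> X) (\<rho> Y)"
  shows "classical_model S \<Omega> \<rho>"
  unfolding classical_model_def using assms by (intro conjI)

lemma is_refl: assumes "information_structure S" "X \<in> Obj S" shows "Arr S X X"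
proof -
  have "\<forall>X\<in>Obj S. Arr S X X"
    using assms(1) unfolding information_structure_def by (elim conjE) assumption
  thus ?thesis using assms by blast
qed

lemma is_antisym: assumes "information_structure S" "X \<in> Obj S" "Y \<in> Obj S" "Arr S X Y" "Arr S Y X" shows "X = Y"
proof -
  have "\<forall>X\<in>Obj S. \<forall>Y\<in>Obj S. Arr S X Y \<and> Arr S Y X \<longrightarrow> X = Y"
    using assms(1) unfolding information_structure_def by (elim conjE) assumption
  thus ?thesis using assms by blast
qed

lemma is_top: "information_structure S \<Longrightarrow> Top S \<in> Obj S"
  unfolding information_structure_def by (elim conjE) assumption

lemma cm_top:
  assumes "information_structure S" "classical_model S \<Omega> \<rho>"
  shows "\<rho> (Top S) = {\<Omega>} \<and> \<Omega> \<noteq> {}"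
proof -
  have T: "Top S \<in> Obj S" using assms(1) unfolding information_structure_def by (elim conjE) assumption
  have "\<exists>e. Ev S (Top S) = {e}" using assms(1) unfolding information_structure_def by (elim conjE) assumption
  then obtain e where e: "Ev S (Top S) = {e}" by blast
  obtain f where "bij_betw f (Ev S (Top S)) (\<rho> (Top S))" using cm_bij[OF assms(2) T] by blast
  hence r: "\<rho> (Top S) = {f e}" using e by (simp add: bij_betw_def)
  have "finite_partition \<Omega> (\<rho> (Top S))" using cm_part[OF assms(2) T] .
  thus ?thesis using r unfolding finite_partition_def by auto
qed

lemma fp_ne: "finite_partition \<Omega> P \<Longrightarrow> {} \<notin> P"
  unfolding finite_partition_def by blast

lemma fp_ne2: "finite_partition \<Omega> P \<Longrightarrow> \<Omega> \<noteq> {} \<Longrightarrow> P \<noteq> {}"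
  unfolding finite_partition_def by blast

lemma fp_single: "\<Omega> \<noteq> {} \<Longrightarrow> finite_partition \<Omega> {\<Omega>}"
  unfolding finite_partition_def by auto

lemma refines_single: "finite_partition \<Omega> P \<Longrightarrow> refines P {\<Omega>}"
  unfolding finite_partition_def refines_def by auto

lemma refines_refl: "refines P P"
  unfolding refines_def by auto

lemma pm_single_l: "finite_partition \<Omega> P \<Longrightarrow> partition_mult {\<Omega>} P = P"
  unfolding finite_partition_def partition_mult_def by (auto simp: Int_absorb1 Union_upper)

lemma pm_single_r: "finite_partition \<Omega> P \<Longrightarrow> partition_mult P {\<Omega>} = P"
  unfolding finite_partition_def partition_mult_def by (auto simp: Int_absorb2 Union_upper)

lemma ft_single: "family_times {A} {B} = {A \<times> B}"
  unfolding family_times_def by auto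

lemma prod_simps:
  "Obj (infostr_prod S1 S2) = Obj S1 \<times> Obj S2"
  "Arr (infostr_prod S1 S2) (X1,X2) (Y1,Y2) = (Arr S1 X1 Y1 \<and> Arr S2 X2 Y2)"
  "Ev (infostr_prod S1 S2) (X1,X2) = Ev S1 X1 \<times> Ev S2 X2"
  unfolding infostr_prod_def by simp_all

lemma prod_meet1:
  assumes "is_meet (infostr_prod S1 S2) (X1,X2) (Y1,Y2) (M1,M2)"
  shows "is_meet S1 X1 Y1 M1"
proof -
  have a: "M1 \<in> Obj S1" "M2 \<in> Obj S2" "Arr S1 M1 X1" "Arr S2 M2 X2" "Arr S1 M1 Y1" "Arr S2 M2 Y2"
    using assms unfolding is_meet_def prod_simps by auto
  have "Arr S1 Z M1" if "Z \<in> Obj S1" "Arr S1 Z X1" "Arr S1 Z Y1" for Z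
  proof -
    have o: "(Z, M2) \<in> Obj (infostr_prod S1 S2)" using that a by (simp add: prod_simps)
    have "\<forall>W\<in>Obj (infostr_prod S1 S2). Arr (infostr_prod S1 S2) W (X1,X2) \<and> Arr (infostr_prod S1 S2) W (Y1,Y2) \<longrightarrow> Arr (infostr_prod S1 S2) W (M1,M2)"
      using assms unfolding is_meet_def by blast
    hence "Arr (infostr_prod S1 S2) (Z, M2) (M1,M2)" using o that a by (simp add: prod_simps)
    thus ?thesis by (simp add: prod_simps)
  qed
  thus ?thesis using a unfolding is_meet_def by blast
qed

lemma prod_meet2:
  assumes "is_meet (infostr_prod S1 S2) (X1,X2) (Y1,Y2) (M1,M2)"
  shows "is_meet S2 X2 Y2 M2"
proof -
  have a: "M1 \<in> Obj S1" "M2 \<in> Obj S2" "Arr S1 M1 X1" "Arr S2 M2 X2" "Arr S1 M1 Y1" "Arr S2 M2 Y2"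
    using assms unfolding is_meet_def prod_simps by auto
  have "Arr S2 Z M2" if "Z \<in> Obj S2" "Arr S2 Z X2" "Arr S2 Z Y2" for Z
  proof -
    have o: "(M1, Z) \<in> Obj (infostr_prod S1 S2)" using that a by (simp add: prod_simps)
    have "\<forall>W\<in>Obj (infostr_prod S1 S2). Arr (infostr_prod S1 S2) W (X1,X2) \<and> Arr (infostr_prod S1 S2) W (Y1,Y2) \<longrightarrow> Arr (infostr_prod S1 S2) W (M1,M2)"
      using assms unfolding is_meet_def by blast
    hence "Arr (infostr_prod S1 S2) (M1, Z) (M1,M2)" using o that a by (simp add: prod_simps)
    thus ?thesis by (simp add: prod_simps)
  qed
  thus ?thesis using a unfolding is_meet_def by blast
qed




lemma is_toparr: assumes "information_structure S" "X \<in> Obj S" shows "Arr S X (Top S)"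
proof -
  have "\<forall>X\<in>Obj S. Arr S X (Top S)"
    using assms(1) unfolding information_structure_def by (elim conjE) assumption
  thus ?thesis using assms by blast
qed

lemma cop_simps:
  "Obj (infostr_coprod S1 S2) = Inl ` Obj S1 \<union> Inr ` (Obj S2 - {Top S2})"
  "Arr (infostr_coprod S1 S2) = coprod_arr S1 S2"
  "Ev (infostr_coprod S1 S2) = coprod_ev S1 S2"
  unfolding infostr_coprod_def by simp_all

lemma cop_obj_l: "Inl x \<in> Obj (infostr_coprod S1 S2) \<longleftrightarrow> x \<in> Obj S1"
  unfolding cop_simps by blast

lemma cop_obj_r: "Inr y \<in> Obj (infostr_coprod S1 S2) \<longleftrightarrow> y \<in> Obj S2 \<and> y \<noteq> Top S2"
  unfolding cop_simps by blast

lemma cop_ball: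
  assumes "\<And>x. x \<in> Obj S1 \<Longrightarrow> P (Inl x)" "\<And>y. y \<in> Obj S2 \<Longrightarrow> y \<noteq> Top S2 \<Longrightarrow> P (Inr y)"
  shows "\<forall>X\<in>Obj (infostr_coprod S1 S2). P X"
  unfolding cop_simps using assms by blast

lemma ft_bij_l:
  assumes "bij_betw f E P" "{} \<notin> P" "B \<noteq> {}"
  shows "bij_betw (\<lambda>a. f a \<times> B) E (family_times P {B})"
  unfolding bij_betw_def
proof
  show "inj_on (\<lambda>a. f a \<times> B) E"
  proof (rule inj_onI)
    fix a a' assume h: "a \<in> E" "a' \<in> E" "f a \<times> B = f a' \<times> B"
    have "f a \<in> P" "f a' \<in> P" using h assms(1) unfolding bij_betw_def by auto
    hence "f a \<noteq> {}" using assms(2) by metis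
    hence "f a = f a'" using h(3) assms(3) by (metis times_eq_iff)
    thus "a = a'" using h assms(1) unfolding bij_betw_def inj_on_def by blast
  qed
  have fam: "family_times P {B} = (\<lambda>A. A \<times> B) ` P" unfolding family_times_def by blast
  have fE: "f ` E = P" using assms(1) unfolding bij_betw_def by blast
  have "(\<lambda>A. A \<times> B) ` (f ` E) = (\<lambda>a. f a \<times> B) ` E" by (rule image_image)
  thus "(\<lambda>a. f a \<times> B) ` E = family_times P {B}" using fam fE by simp
qed

lemma ft_bij_r:
  assumes "bij_betw f E P" "{} \<notin> P" "B \<noteq> {}"
  shows "bij_betw (\<lambda>a. B \<times> f a) E (family_times {B} P)"
  unfolding bij_betw_def
proof
  show "inj_on (\<lambda>a. B \<times> f a) E"
  proof (rule inj_onI)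
    fix a a' assume h: "a \<in> E" "a' \<in> E" "B \<times> f a = B \<times> f a'"
    have "f a \<in> P" "f a' \<in> P" using h assms(1) unfolding bij_betw_def by auto
    hence "f a \<noteq> {}" using assms(2) by metis
    hence "f a = f a'" using h(3) assms(3) by (metis times_eq_iff)
    thus "a = a'" using h assms(1) unfolding bij_betw_def inj_on_def by blast
  qed
  have fam: "family_times {B} P = (\<lambda>A. B \<times> A) ` P" unfolding family_times_def by blast
  have fE: "f ` E = P" using assms(1) unfolding bij_betw_def by blast
  have "(\<lambda>A. B \<times> A) ` (f ` E) = (\<lambda>a. B \<times> f a) ` E" by (rule image_image)
  thus "(\<lambda>a. B \<times> f a) ` E = family_times {B} P" using fam fE by simp
qed

lemma bij_projl: "bij_betw projl (Inl ` E) E"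
  unfolding bij_betw_def inj_on_def by (simp add: image_image)

lemma bij_projr: "bij_betw projr (Inr ` E) E"
  unfolding bij_betw_def inj_on_def by (simp add: image_image)

lemma cop_meet_ll:
  assumes "is_meet (infostr_coprod S1 S2) (Inl x) (Inl x') (Inl m)"
  shows "is_meet S1 x x' m"
proof -
  have "Inl m \<in> Obj (infostr_coprod S1 S2)" "Arr (infostr_coprod S1 S2) (Inl m) (Inl x)" "Arr (infostr_coprod S1 S2) (Inl m) (Inl x')"
    using assms unfolding is_meet_def by blast+
  hence a: "m \<in> Obj S1" "Arr S1 m x" "Arr S1 m x'" by (simp only: cop_obj_l, simp_all add: cop_simps)
  have "Arr S1 Z m" if "Z \<in> Obj S1" "Arr S1 Z x" "Arr S1 Z x'" for Z
  proof -
    have "\<forall>W\<in>Obj (infostr_coprod S1 S2). Arr (infostr_coprod S1 S2) W (Inl x) \<and> Arr (infostr_coprod S1 S2) W (Inl x') \<longrightarrow> Arr (infostr_coprod S1 S2) W (Inl m)"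
      using assms unfolding is_meet_def by blast
    moreover have "Inl Z \<in> Obj (infostr_coprod S1 S2)" using that by (simp add: cop_obj_l)
    ultimately have "Arr (infostr_coprod S1 S2) (Inl Z) (Inl x) \<and> Arr (infostr_coprod S1 S2) (Inl Z) (Inl x') \<longrightarrow> Arr (infostr_coprod S1 S2) (Inl Z) (Inl m)"
      by (rule bspec)
    hence "Arr (infostr_coprod S1 S2) (Inl Z) (Inl m)" using that by (simp add: cop_simps)
    thus ?thesis by (simp add: cop_simps)
  qed
  thus ?thesis using a unfolding is_meet_def by blast
qed

lemma cop_meet_rr:
  assumes i2: "information_structure S2" and "is_meet (infostr_coprod S1 S2) (Inr y) (Inr y') (Inr m)"
    and y: "y \<in> Obj S2" "y \<noteq> Top S2"
  shows "is_meet S2 y y' m"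
proof -
  have "Inr m \<in> Obj (infostr_coprod S1 S2)" "Arr (infostr_coprod S1 S2) (Inr m) (Inr y)" "Arr (infostr_coprod S1 S2) (Inr m) (Inr y')"
    using assms(2) unfolding is_meet_def by blast+
  hence a: "m \<in> Obj S2" "Arr S2 m y" "Arr S2 m y'" by (simp only: cop_obj_r, simp_all add: cop_simps)
  have "Arr S2 Z m" if "Z \<in> Obj S2" "Arr S2 Z y" "Arr S2 Z y'" for Z
  proof -
    have "Z \<noteq> Top S2"
    proof
      assume "Z = Top S2"
      hence "Arr S2 (Top S2) y" using that by simp
      moreover have "Arr S2 y (Top S2)" using is_toparr[OF i2 y(1)] .
      ultimately have "y = Top S2" using is_antisym[OF i2 y(1) is_top[OF i2]] by blast
      thus False using y(2) by simp
    qed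
    have "\<forall>W\<in>Obj (infostr_coprod S1 S2). Arr (infostr_coprod S1 S2) W (Inr y) \<and> Arr (infostr_coprod S1 S2) W (Inr y') \<longrightarrow> Arr (infostr_coprod S1 S2) W (Inr m)"
      using assms(2) unfolding is_meet_def by blast
    moreover have "Inr Z \<in> Obj (infostr_coprod S1 S2)" using that \<open>Z \<noteq> Top S2\<close> by (simp add: cop_obj_r)
    ultimately have "Arr (infostr_coprod S1 S2) (Inr Z) (Inr y) \<and> Arr (infostr_coprod S1 S2) (Inr Z) (Inr y') \<longrightarrow> Arr (infostr_coprod S1 S2) (Inr Z) (Inr m)"
      by (rule bspec)
    hence "Arr (infostr_coprod S1 S2) (Inr Z) (Inr m)" using that by (simp add: cop_simps)
    thus ?thesis by (simp add: cop_simps)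
  qed
  thus ?thesis using a unfolding is_meet_def by blast
qed



lemma is_meet_D: "is_meet S X Y M \<Longrightarrow> M \<in> Obj S \<and> Arr S M X \<and> Arr S M Y"
  unfolding is_meet_def by blast

lemma is_meet_U: "is_meet S X Y M \<Longrightarrow> Z \<in> Obj S \<Longrightarrow> Arr S Z X \<Longrightarrow> Arr S Z Y \<Longrightarrow> Arr S Z M"
  unfolding is_meet_def by blast

lemma cop_model:
  assumes i1: "information_structure S1" and i2: "information_structure S2"
    and c1: "classical_model S1 \<Omega>1 \<rho>1" and c2: "classical_model S2 \<Omega>2 \<rho>2"
  shows "classical_model (infostr_coprod S1 S2) (\<Omega>1 \<times> \<Omega>2) (rho_coprod S1 \<Omega>1 \<rho>1 \<Omega>2 \<rho>2)"
proof -
  define R where "R = rho_coprod S1 \<Omega>1 \<rho>1 \<Omega>2 \<rho>2"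
  define C where "C = infostr_coprod S1 S2"
  have n1: "\<Omega>1 \<noteq> {}" and T1: "\<rho>1 (Top S1) = {\<Omega>1}" using cm_top[OF i1 c1] by blast+
  have n2: "\<Omega>2 \<noteq> {}" and T2: "\<rho>2 (Top S2) = {\<Omega>2}" using cm_top[OF i2 c2] by blast+
  have P1: "finite_partition \<Omega>1 (\<rho>1 X)" if "X \<in> Obj S1" for X using cm_part[OF c1 that] .
  have P2: "finite_partition \<Omega>2 (\<rho>2 X)" if "X \<in> Obj S2" for X using cm_part[OF c2 that] .
  have E1: "{} \<notin> \<rho>1 X" "\<rho>1 X \<noteq> {}" if "X \<in> Obj S1" for X using P1[OF that] fp_ne fp_ne2 n1 by blast+
  have E2: "{} \<notin> \<rho>2 X" "\<rho>2 X \<noteq> {}" if "X \<in> Obj S2" for X using P2[OF that] fp_ne fp_ne2 n2 by blast+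
  have ES1: "{} \<notin> {\<Omega>1}" "{\<Omega>1} \<noteq> {}" using n1 by auto
  have ES2: "{} \<notin> {\<Omega>2}" "{\<Omega>2} \<noteq> {}" using n2 by auto
  have Top1: "Top S1 \<in> Obj S1" using is_top[OF i1] .
  have Top2: "Top S2 \<in> Obj S2" using is_top[OF i2] .
  have rl: "R (Inl x) = family_times (\<rho>1 x) {\<Omega>2}" if "x \<in> Obj S1" for x
  proof (cases "x = Top S1")
    case True thus ?thesis by (simp add: R_def T1 ft_single)
  next
    case False thus ?thesis by (simp add: R_def)
  qed
  have rr: "R (Inr y) = family_times {\<Omega>1} (\<rho>2 y)" for y by (simp add: R_def)
  have rtop: "R (Inl (Top S1)) = {\<Omega>1 \<times> \<Omega>2}" by (simp add: R_def)
  have arr: "Arr C (Inl x) (Inl x') = Arr S1 x x'" "Arr C (Inr y) (Inr y') = Arr S2 y y'"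
    "Arr C (Inr y) (Inl x') = (x' = Top S1)" "Arr C (Inl x) (Inr y') = False" for x x' y y'
    by (simp_all add: C_def cop_simps)
  have objl: "Inl x \<in> Obj C \<longleftrightarrow> x \<in> Obj S1" for x unfolding C_def by (rule cop_obj_l)
  have objr: "Inr y \<in> Obj C \<longleftrightarrow> y \<in> Obj S2 \<and> y \<noteq> Top S2" for y unfolding C_def by (rule cop_obj_r)
  have ball: "\<forall>X\<in>Obj C. Q X" if "\<And>x. x \<in> Obj S1 \<Longrightarrow> Q (Inl x)" "\<And>y. y \<in> Obj S2 \<Longrightarrow> y \<noteq> Top S2 \<Longrightarrow> Q (Inr y)"
    for Q unfolding C_def using cop_ball[of S1 Q S2] that by blast
  have part: "\<forall>X\<in>Obj C. finite_partition (\<Omega>1 \<times> \<Omega>2) (R X)"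
  proof (rule ball)
    fix x assume "x \<in> Obj S1"
    thus "finite_partition (\<Omega>1 \<times> \<Omega>2) (R (Inl x))" unfolding rl[OF \<open>x \<in> Obj S1\<close>]
      by (intro ft_partition P1 fp_single n2)
  next
    fix y assume "y \<in> Obj S2" "y \<noteq> Top S2"
    thus "finite_partition (\<Omega>1 \<times> \<Omega>2) (R (Inr y))" unfolding rr
      by (intro ft_partition P2 fp_single n1)
  qed
  have refs: "\<forall>X\<in>Obj C. \<forall>Y\<in>Obj C. Arr C X Y \<longrightarrow> refines (R X) (R Y)"
  proof (rule ball)
    fix x assume x: "x \<in> Obj S1"
    show "\<forall>Y\<in>Obj C. Arr C (Inl x) Y \<longrightarrow> refines (R (Inl x)) (R Y)"
    proof (rule ball)
      fix x' assume x': "x' \<in> Obj S1"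
      show "Arr C (Inl x) (Inl x') \<longrightarrow> refines (R (Inl x)) (R (Inl x'))"
      proof
        assume "Arr C (Inl x) (Inl x')"
        hence "Arr S1 x x'" by (simp add: arr)
        hence "refines (\<rho>1 x) (\<rho>1 x')" using cm_ref[OF c1 x x'] by simp
        thus "refines (R (Inl x)) (R (Inl x'))" unfolding rl[OF x] rl[OF x']
          by (rule ft_refines) (rule refines_refl)
      qed
    next
      fix y' show "Arr C (Inl x) (Inr y') \<longrightarrow> refines (R (Inl x)) (R (Inr y'))" by (simp add: arr)
    qed
  next
    fix y assume y: "y \<in> Obj S2" "y \<noteq> Top S2"
    show "\<forall>Y\<in>Obj C. Arr C (Inr y) Y \<longrightarrow> refines (R (Inr y)) (R Y)"
    proof (rule ball)
      fix x' assume x': "x' \<in> Obj S1"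
      show "Arr C (Inr y) (Inl x') \<longrightarrow> refines (R (Inr y)) (R (Inl x'))"
      proof
        assume "Arr C (Inr y) (Inl x')"
        hence "x' = Top S1" by (simp add: arr)
        have "refines {\<Omega>1} (\<rho>1 x')" using T1 \<open>x' = Top S1\<close> refines_refl by simp
        moreover have "refines (\<rho>2 y) {\<Omega>2}" using refines_single[OF P2[OF y(1)]] .
        ultimately show "refines (R (Inr y)) (R (Inl x'))" unfolding rr rl[OF x']
          by (rule ft_refines)
      qed
    next
      fix y' assume y': "y' \<in> Obj S2"
      show "Arr C (Inr y) (Inr y') \<longrightarrow> refines (R (Inr y)) (R (Inr y'))"
      proof
        assume "Arr C (Inr y) (Inr y')"
        hence "Arr S2 y y'" by (simp add: arr)
        hence "refines (\<rho>2 y) (\<rho>2 y')" using cm_ref[OF c2 y(1) y'] by simp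
        thus "refines (R (Inr y)) (R (Inr y'))" unfolding rr
          by (intro ft_refines refines_refl)
      qed
    qed
  qed
  have inj: "\<forall>X\<in>Obj C. \<forall>Y\<in>Obj C. R X = R Y \<longrightarrow> X = Y"
  proof (rule ball)
    fix x assume x: "x \<in> Obj S1"
    show "\<forall>Y\<in>Obj C. R (Inl x) = R Y \<longrightarrow> Inl x = Y"
    proof (rule ball)
      fix x' assume x': "x' \<in> Obj S1"
      show "R (Inl x) = R (Inl x') \<longrightarrow> Inl x = Inl x'"
      proof
        assume "R (Inl x) = R (Inl x')"
        hence "family_times (\<rho>1 x) {\<Omega>2} = family_times (\<rho>1 x') {\<Omega>2}" unfolding rl[OF x] rl[OF x'] .
        hence "\<rho>1 x = \<rho>1 x'" using ft_inj E1[OF x] E1[OF x'] ES2 by blast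
        thus "Inl x = Inl x'" using cm_inj[OF c1 x x'] by simp
      qed
    next
      fix y' assume y': "y' \<in> Obj S2" "y' \<noteq> Top S2"
      show "R (Inl x) = R (Inr y') \<longrightarrow> Inl x = Inr y'"
      proof
        assume "R (Inl x) = R (Inr y')"
        hence "family_times (\<rho>1 x) {\<Omega>2} = family_times {\<Omega>1} (\<rho>2 y')" unfolding rl[OF x] rr .
        hence "{\<Omega>2} = \<rho>2 y'" using ft_inj E1[OF x] E2[OF y'(1)] ES1 ES2 by blast
        hence "\<rho>2 (Top S2) = \<rho>2 y'" using T2 by simp
        hence "Top S2 = y'" using cm_inj[OF c2 Top2 y'(1)] by simp
        thus "Inl x = Inr y'" using y'(2) by simp
      qed
    qed
  next
    fix y assume y: "y \<in> Obj S2" "y \<noteq> Top S2"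
    show "\<forall>Y\<in>Obj C. R (Inr y) = R Y \<longrightarrow> Inr y = Y"
    proof (rule ball)
      fix x' assume x': "x' \<in> Obj S1"
      show "R (Inr y) = R (Inl x') \<longrightarrow> Inr y = Inl x'"
      proof
        assume "R (Inr y) = R (Inl x')"
        hence "family_times {\<Omega>1} (\<rho>2 y) = family_times (\<rho>1 x') {\<Omega>2}" unfolding rl[OF x'] rr .
        hence "\<rho>2 y = {\<Omega>2}" using ft_inj E1[OF x'] E2[OF y(1)] ES1 ES2 by blast
        hence "\<rho>2 y = \<rho>2 (Top S2)" using T2 by simp
        hence "y = Top S2" using cm_inj[OF c2 y(1) Top2] by simp
        thus "Inr y = Inl x'" using y(2) by simp
      qed
    next
      fix y' assume y': "y' \<in> Obj S2" "y' \<noteq> Top S2"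
      show "R (Inr y) = R (Inr y') \<longrightarrow> Inr y = Inr y'"
      proof
        assume "R (Inr y) = R (Inr y')"
        hence "family_times {\<Omega>1} (\<rho>2 y) = family_times {\<Omega>1} (\<rho>2 y')" unfolding rr .
        hence "\<rho>2 y = \<rho>2 y'" using ft_inj E2[OF y(1)] E2[OF y'(1)] ES1 by blast
        thus "Inr y = Inr y'" using cm_inj[OF c2 y(1) y'(1)] by simp
      qed
    qed
  qed
  have bij: "\<forall>X\<in>Obj C. \<exists>f. bij_betw f (Ev C X) (R X)"
  proof (rule ball)
    fix x assume x: "x \<in> Obj S1"
    obtain f where f: "bij_betw f (Ev S1 x) (\<rho>1 x)" using cm_bij[OF c1 x] by blast
    have "bij_betw (\<lambda>a. f a \<times> \<Omega>2) (Ev S1 x) (family_times (\<rho>1 x) {\<Omega>2})"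
      using ft_bij_l[OF f E1(1)[OF x] n2] .
    hence "bij_betw ((\<lambda>a. f a \<times> \<Omega>2) \<circ> projl) (Inl ` Ev S1 x) (family_times (\<rho>1 x) {\<Omega>2})"
      by (rule bij_betw_trans[OF bij_projl])
    moreover have "Ev C (Inl x) = Inl ` Ev S1 x" by (simp add: C_def cop_simps)
    ultimately show "\<exists>f. bij_betw f (Ev C (Inl x)) (R (Inl x))" unfolding rl[OF x] by auto
  next
    fix y assume y: "y \<in> Obj S2" "y \<noteq> Top S2"
    obtain f where f: "bij_betw f (Ev S2 y) (\<rho>2 y)" using cm_bij[OF c2 y(1)] by blast
    have "bij_betw (\<lambda>a. \<Omega>1 \<times> f a) (Ev S2 y) (family_times {\<Omega>1} (\<rho>2 y))"
      using ft_bij_r[OF f E2(1)[OF y(1)] n1] .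
    hence "bij_betw ((\<lambda>a. \<Omega>1 \<times> f a) \<circ> projr) (Inr ` Ev S2 y) (family_times {\<Omega>1} (\<rho>2 y))"
      by (rule bij_betw_trans[OF bij_projr])
    moreover have "Ev C (Inr y) = Inr ` Ev S2 y" by (simp add: C_def cop_simps)
    ultimately show "\<exists>f. bij_betw f (Ev C (Inr y)) (R (Inr y))" unfolding rr by auto
  qed
  have pm2: "partition_mult {\<Omega>2} {\<Omega>2} = {\<Omega>2}" using pm_single_l[OF fp_single[OF n2]] .
  have pm1: "partition_mult {\<Omega>1} {\<Omega>1} = {\<Omega>1}" using pm_single_l[OF fp_single[OF n1]] .
  have meets: "\<forall>X\<in>Obj C. \<forall>Y\<in>Obj C. \<forall>M. is_meet C X Y M \<longrightarrow> R M = partition_mult (R X) (R Y)"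
  proof (rule ball)
    fix x assume x: "x \<in> Obj S1"
    show "\<forall>Y\<in>Obj C. \<forall>M. is_meet C (Inl x) Y M \<longrightarrow> R M = partition_mult (R (Inl x)) (R Y)"
    proof (rule ball)
      fix x' assume x': "x' \<in> Obj S1"
      show "\<forall>M. is_meet C (Inl x) (Inl x') M \<longrightarrow> R M = partition_mult (R (Inl x)) (R (Inl x'))"
      proof (intro allI impI)
        fix M assume mt: "is_meet C (Inl x) (Inl x') M"
        show "R M = partition_mult (R (Inl x)) (R (Inl x'))"
        proof (cases M)
          case (Inl m)
          have mm: "is_meet S1 x x' m" using mt unfolding Inl C_def by (rule cop_meet_ll)
          have m: "m \<in> Obj S1" using is_meet_D[OF mm] by blast
          have "\<rho>1 m = partition_mult (\<rho>1 x) (\<rho>1 x')" using cm_meet[OF c1 x x' mm] .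
          thus ?thesis unfolding Inl rl[OF x] rl[OF x'] rl[OF m] ft_mult pm2 by simp
        next
          case (Inr m)
          have "Arr C (Inr m) (Inl x)" using is_meet_D[OF mt] unfolding Inr by blast
          hence xt: "x = Top S1" by (simp add: arr)
          have "Arr C (Inr m) (Inl x')" using is_meet_D[OF mt] unfolding Inr by blast
          hence xt': "x' = Top S1" by (simp add: arr)
          have "Arr C (Inl (Top S1)) (Inr m)"
          proof (rule is_meet_U[OF mt[unfolded Inr]])
            show "Inl (Top S1) \<in> Obj C" using objl Top1 by simp
            show "Arr C (Inl (Top S1)) (Inl x)" "Arr C (Inl (Top S1)) (Inl x')"
              using is_refl[OF i1 Top1] xt xt' by (simp_all add: arr)
          qed
          thus ?thesis by (simp add: arr)
        qed
      qed
    next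
      fix y' assume y': "y' \<in> Obj S2" "y' \<noteq> Top S2"
      show "\<forall>M. is_meet C (Inl x) (Inr y') M \<longrightarrow> R M = partition_mult (R (Inl x)) (R (Inr y'))"
      proof (intro allI impI)
        fix M assume mt: "is_meet C (Inl x) (Inr y') M"
        show "R M = partition_mult (R (Inl x)) (R (Inr y'))"
        proof (cases M)
          case (Inl m)
          have "Arr C (Inl m) (Inr y')" using is_meet_D[OF mt] unfolding Inl by blast
          thus ?thesis by (simp add: arr)
        next
          case (Inr m)
          have D: "Inr m \<in> Obj C" "Arr C (Inr m) (Inl x)" "Arr C (Inr m) (Inr y')"
            using is_meet_D[OF mt] unfolding Inr by blast+
          hence xt: "x = Top S1" and m: "m \<in> Obj S2" and my: "Arr S2 m y'" by (simp_all add: arr objr)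
          have "Arr C (Inr y') (Inr m)"
          proof (rule is_meet_U[OF mt[unfolded Inr]])
            show "Inr y' \<in> Obj C" using objr y' by simp
            show "Arr C (Inr y') (Inl x)" "Arr C (Inr y') (Inr y')"
              using is_refl[OF i2 y'(1)] xt by (simp_all add: arr)
          qed
          hence "Arr S2 y' m" by (simp add: arr)
          hence "m = y'" using is_antisym[OF i2 m y'(1) my] by simp
          have "finite_partition (\<Omega>1 \<times> \<Omega>2) (R (Inr y'))" using part objr y' by blast
          hence "partition_mult {\<Omega>1 \<times> \<Omega>2} (R (Inr y')) = R (Inr y')" by (rule pm_single_l)
          thus ?thesis unfolding Inr \<open>m = y'\<close> xt rtop by simp
        qed
      qed
    qed
  next
    fix y assume y: "y \<in> Obj S2" "y \<noteq> Top S2"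
    show "\<forall>Y\<in>Obj C. \<forall>M. is_meet C (Inr y) Y M \<longrightarrow> R M = partition_mult (R (Inr y)) (R Y)"
    proof (rule ball)
      fix x' assume x': "x' \<in> Obj S1"
      show "\<forall>M. is_meet C (Inr y) (Inl x') M \<longrightarrow> R M = partition_mult (R (Inr y)) (R (Inl x'))"
      proof (intro allI impI)
        fix M assume mt: "is_meet C (Inr y) (Inl x') M"
        show "R M = partition_mult (R (Inr y)) (R (Inl x'))"
        proof (cases M)
          case (Inl m)
          have "Arr C (Inl m) (Inr y)" using is_meet_D[OF mt] unfolding Inl by blast
          thus ?thesis by (simp add: arr)
        next
          case (Inr m)
          have D: "Inr m \<in> Obj C" "Arr C (Inr m) (Inr y)" "Arr C (Inr m) (Inl x')"
            using is_meet_D[OF mt] unfolding Inr by blast+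
          hence xt: "x' = Top S1" and m: "m \<in> Obj S2" and my: "Arr S2 m y" by (simp_all add: arr objr)
          have "Arr C (Inr y) (Inr m)"
          proof (rule is_meet_U[OF mt[unfolded Inr]])
            show "Inr y \<in> Obj C" using objr y by simp
            show "Arr C (Inr y) (Inr y)" "Arr C (Inr y) (Inl x')"
              using is_refl[OF i2 y(1)] xt by (simp_all add: arr)
          qed
          hence "Arr S2 y m" by (simp add: arr)
          hence "m = y" using is_antisym[OF i2 m y(1) my] by simp
          have "finite_partition (\<Omega>1 \<times> \<Omega>2) (R (Inr y))" using part objr y by blast
          hence "partition_mult (R (Inr y)) {\<Omega>1 \<times> \<Omega>2} = R (Inr y)" by (rule pm_single_r)
          thus ?thesis unfolding Inr \<open>m = y\<close> xt rtop by simp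
        qed
      qed
    next
      fix y' assume y': "y' \<in> Obj S2" "y' \<noteq> Top S2"
      show "\<forall>M. is_meet C (Inr y) (Inr y') M \<longrightarrow> R M = partition_mult (R (Inr y)) (R (Inr y'))"
      proof (intro allI impI)
        fix M assume mt: "is_meet C (Inr y) (Inr y') M"
        show "R M = partition_mult (R (Inr y)) (R (Inr y'))"
        proof (cases M)
          case (Inl m)
          have "Arr C (Inl m) (Inr y)" using is_meet_D[OF mt] unfolding Inl by blast
          thus ?thesis by (simp add: arr)
        next
          case (Inr m)
          have mm: "is_meet S2 y y' m" using mt unfolding Inr C_def by (rule cop_meet_rr[OF i2 _ y])
          have "\<rho>2 m = partition_mult (\<rho>2 y) (\<rho>2 y')" using cm_meet[OF c2 y(1) y'(1) mm] .
          thus ?thesis unfolding Inr rr ft_mult pm1 by simp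
        qed
      qed
    qed
  qed
  show ?thesis unfolding R_def[symmetric] C_def[symmetric]
    by (rule cm_intro[OF part refs _ bij meets]) (unfold inj_on_def, use inj in blast)
qed



lemma prod_model:
  assumes i1: "information_structure S1" and i2: "information_structure S2"
    and c1: "classical_model S1 \<Omega>1 \<rho>1" and c2: "classical_model S2 \<Omega>2 \<rho>2"
  shows "classical_model (infostr_prod S1 S2) (\<Omega>1 \<times> \<Omega>2) (rho_prod \<rho>1 \<rho>2)"
proof -
  have n1: "\<Omega>1 \<noteq> {}" using cm_top[OF i1 c1] by blast
  have n2: "\<Omega>2 \<noteq> {}" using cm_top[OF i2 c2] by blast
  have P1: "finite_partition \<Omega>1 (\<rho>1 X)" if "X \<in> Obj S1" for X using cm_part[OF c1 that] .
  have P2: "finite_partition \<Omega>2 (\<rho>2 X)" if "X \<in> Obj S2" for X using cm_part[OF c2 that] .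
  have rp: "rho_prod \<rho>1 \<rho>2 (X1, X2) = family_times (\<rho>1 X1) (\<rho>2 X2)" for X1 X2
    by (simp add: rho_prod_def)
  show ?thesis
  proof (rule cm_intro)
    show "\<forall>X\<in>Obj (infostr_prod S1 S2). finite_partition (\<Omega>1 \<times> \<Omega>2) (rho_prod \<rho>1 \<rho>2 X)"
    proof (clarsimp simp: prod_simps rp)
      fix a b assume "a \<in> Obj S1" "b \<in> Obj S2"
      thus "finite_partition (\<Omega>1 \<times> \<Omega>2) (family_times (\<rho>1 a) (\<rho>2 b))"
        by (intro ft_partition P1 P2)
    qed
    show "\<forall>X\<in>Obj (infostr_prod S1 S2). \<forall>Y\<in>Obj (infostr_prod S1 S2).
      Arr (infostr_prod S1 S2) X Y \<longrightarrow> refines (rho_prod \<rho>1 \<rho>2 X) (rho_prod \<rho>1 \<rho>2 Y)"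
    proof (clarsimp simp: prod_simps rp)
      fix a b a' b' assume h: "a \<in> Obj S1" "b \<in> Obj S2" "a' \<in> Obj S1" "b' \<in> Obj S2" "Arr S1 a a'" "Arr S2 b b'"
      show "refines (family_times (\<rho>1 a) (\<rho>2 b)) (family_times (\<rho>1 a') (\<rho>2 b'))"
        by (rule ft_refines) (rule cm_ref[OF c1], use h in simp_all, rule cm_ref[OF c2], use h in simp_all)
    qed
    show "inj_on (rho_prod \<rho>1 \<rho>2) (Obj (infostr_prod S1 S2))"
    proof (rule inj_onI, clarsimp simp: prod_simps rp)
      fix a b a' b' assume h: "a \<in> Obj S1" "b \<in> Obj S2" "a' \<in> Obj S1" "b' \<in> Obj S2"
        "family_times (\<rho>1 a) (\<rho>2 b) = family_times (\<rho>1 a') (\<rho>2 b')"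
      have "\<rho>1 a = \<rho>1 a' \<and> \<rho>2 b = \<rho>2 b'"
      proof (rule ft_inj[OF h(5)])
        show "{} \<notin> \<rho>1 a" "{} \<notin> \<rho>1 a'" using fp_ne P1 h by blast+
        show "{} \<notin> \<rho>2 b" "{} \<notin> \<rho>2 b'" using fp_ne P2 h by blast+
        show "\<rho>1 a \<noteq> {}" "\<rho>1 a' \<noteq> {}" using fp_ne2 P1 h n1 by blast+
        show "\<rho>2 b \<noteq> {}" "\<rho>2 b' \<noteq> {}" using fp_ne2 P2 h n2 by blast+
      qed
      thus "a = a' \<and> b = b'" using cm_inj[OF c1] cm_inj[OF c2] h by blast
    qed
    show "\<forall>X\<in>Obj (infostr_prod S1 S2). \<exists>f. bij_betw f (Ev (infostr_prod S1 S2) X) (rho_prod \<rho>1 \<rho>2 X)"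
    proof (clarsimp simp: prod_simps rp)
      fix a b assume h: "a \<in> Obj S1" "b \<in> Obj S2"
      obtain f where f: "bij_betw f (Ev S1 a) (\<rho>1 a)" using cm_bij[OF c1 h(1)] by blast
      obtain g where g: "bij_betw g (Ev S2 b) (\<rho>2 b)" using cm_bij[OF c2 h(2)] by blast
      show "\<exists>f. bij_betw f (Ev S1 a \<times> Ev S2 b) (family_times (\<rho>1 a) (\<rho>2 b))"
      proof
        have "{} \<notin> \<rho>1 a" using fp_ne P1 h by blast
        moreover have "{} \<notin> \<rho>2 b" using fp_ne P2 h by blast
        ultimately show "bij_betw (\<lambda>(x,y). f x \<times> g y) (Ev S1 a \<times> Ev S2 b) (family_times (\<rho>1 a) (\<rho>2 b))"
          by (rule ft_bij[OF f g])
      qed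
    qed
    show "\<forall>X\<in>Obj (infostr_prod S1 S2). \<forall>Y\<in>Obj (infostr_prod S1 S2). \<forall>M.
       is_meet (infostr_prod S1 S2) X Y M \<longrightarrow> rho_prod \<rho>1 \<rho>2 M = partition_mult (rho_prod \<rho>1 \<rho>2 X) (rho_prod \<rho>1 \<rho>2 Y)"
    proof (clarsimp simp: prod_simps)
      fix a b a' b' m1 m2 assume h: "a \<in> Obj S1" "b \<in> Obj S2" "a' \<in> Obj S1" "b' \<in> Obj S2"
        "is_meet (infostr_prod S1 S2) (a, b) (a', b') (m1, m2)"
      have "\<rho>1 m1 = partition_mult (\<rho>1 a) (\<rho>1 a')" using cm_meet[OF c1 h(1) h(3) prod_meet1[OF h(5)]] .
      moreover have "\<rho>2 m2 = partition_mult (\<rho>2 b) (\<rho>2 b')" using cm_meet[OF c2 h(2) h(4) prod_meet2[OF h(5)]] .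
      ultimately show "rho_prod \<rho>1 \<rho>2 (m1, m2) = partition_mult (rho_prod \<rho>1 \<rho>2 (a, b)) (rho_prod \<rho>1 \<rho>2 (a', b'))"
        by (simp add: rp ft_mult)
    qed
  qed
qed


theorem proposition2p15:
  fixes S1 :: "('a, 'b) infostr" and S2 :: "('c, 'd) infostr"
    and \<Omega>1 :: "'u set" and \<Omega>2 :: "'v set"
    and \<rho>1 :: "'a \<Rightarrow> 'u set set" and \<rho>2 :: "'c \<Rightarrow> 'v set set"
  assumes "information_structure S1" and "information_structure S2"
    and "classical_model S1 \<Omega>1 \<rho>1" and "classical_model S2 \<Omega>2 \<rho>2"
  shows "classical_model (infostr_prod S1 S2) (\<Omega>1 \<times> \<Omega>2) (rho_prod \<rho>1 \<rho>2) \<and>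
         classical_model (infostr_coprod S1 S2) (\<Omega>1 \<times> \<Omega>2) (rho_coprod S1 \<Omega>1 \<rho>1 \<Omega>2 \<rho>2)"
  using prod_model[OF assms] cop_model[OF assms] by (rule conjI)

end
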